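(* Let $0<\mu<1$, $0<\nu<1$, $C>0$, $N_0\in\mathbb Z$, and for $n\ge N_0$ let $F_n,G_n\in\mathbb R^{1\times4}$ and $H_n\in\mathbb R^{2\times4}$ satisfy $\|F_n\|,\|G_n\|,\|H_n\|\le C\nu^n$. Consider the system $$\xi_{n+1}=\mu\xi_n+F_n\zeta_n,\quad \eta_{n+1}=\mu^{-1}\eta_n+G_n\zeta_n,\quad \chi_{n+1}=\chi_n+H_n\zeta_n,$$ where $\xi_n,\eta_n\in\mathbb R$, $\chi_n\in\mathbb R^2$, $\zeta_n=(\xi_n,\eta_n,\chi_n)^T\in\mathbb R^4$. Then there is an integer $N\ge N_0$ such that for every $\xi^0\in\mathbb R$ and $\chi_+\in\mathbb R^2$ there exists a unique solution $\{\zeta_n\}_{n\ge N}$ of the system with $\xi_N=\xi^0$, $\chi_n\to\chi_+$, $\xi_n\to0$ and $\eta_n\to0$ as $n\to+\infty$. *)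

theory Defs
  imports "HOL-Analysis.Analysis"
begin

definition zeta :: "real \<Rightarrow> real \<Rightarrow> real^2 \<Rightarrow> real^4" where
  "zeta x y c = vector [x, y, c $ 1, c $ 2]"

text \<open>Row vectors F_n, G_n in R^(1x4) act by the inner product; H_n in R^(2x4) acts by
  matrix-vector multiplication.\<close>
definition solves_sys ::
  "real \<Rightarrow> (int \<Rightarrow> real^4) \<Rightarrow> (int \<Rightarrow> real^4) \<Rightarrow> (int \<Rightarrow> real^4^2) \<Rightarrow> int
    \<Rightarrow> (int \<Rightarrow> real) \<Rightarrow> (int \<Rightarrow> real) \<Rightarrow> (int \<Rightarrow> real^2) \<Rightarrow> bool" where
  "solves_sys \<mu> F G H N xi eta chi \<longleftrightarrow>
     (\<forall>n\<ge>N. xi (n + 1) = \<mu> * xi n + F n \<bullet> zeta (xi n) (eta n) (chi n)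
           \<and> eta (n + 1) = inverse \<mu> * eta n + G n \<bullet> zeta (xi n) (eta n) (chi n)
           \<and> chi (n + 1) = chi n + H n *v zeta (xi n) (eta n) (chi n))"

definition good_sol ::
  "real \<Rightarrow> (int \<Rightarrow> real^4) \<Rightarrow> (int \<Rightarrow> real^4) \<Rightarrow> (int \<Rightarrow> real^4^2) \<Rightarrow> int
    \<Rightarrow> real \<Rightarrow> real^2 \<Rightarrow> (int \<Rightarrow> real) \<Rightarrow> (int \<Rightarrow> real) \<Rightarrow> (int \<Rightarrow> real^2) \<Rightarrow> bool" where
  "good_sol \<mu> F G H N xi0 chip xi eta chi \<longleftrightarrow>
     solves_sys \<mu> F G H N xi eta chi \<and> xi N = xi0
     \<and> (chi \<longlongrightarrow> chip) at_top \<and> (xi \<longlongrightarrow> 0) at_top \<and> (eta \<longlongrightarrow> 0) at_top"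

end

theory Submission
  imports Defs
begin

definition chio :: "real^4 \<Rightarrow> real^2" where "chio v = vector [v$3, v$4]"

lemma vector_4:
 "(vector [x,y,z,w] ::('a::zero)^4)$1 = x"
 "(vector [x,y,z,w] ::('a::zero)^4)$2 = y"
 "(vector [x,y,z,w] ::('a::zero)^4)$3 = z"
 "(vector [x,y,z,w] ::('a::zero)^4)$4 = w"
  unfolding vector_def by simp_all

lemma zeta_nth[simp]: "zeta x y c $ 1 = x" "zeta x y c $ 2 = y" "zeta x y c $ 3 = c$1" "zeta x y c $ 4 = c$2"
  by (simp_all add: zeta_def vector_4)

lemma chio_zeta[simp]: "chio (zeta x y c) = c"
  by (simp add: chio_def vec_eq_iff forall_2)

lemma zeta_chio[simp]: "zeta (v$1) (v$2) (chio v) = v"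
  by (simp add: chio_def vec_eq_iff forall_4)

lemma zeta_diff: "zeta x y c - zeta x' y' c' = zeta (x-x') (y-y') (c-c')"
  by (simp add: vec_eq_iff forall_4)

lemma norm_c2: "norm (c::real^2) \<le> \<bar>c$1\<bar> + \<bar>c$2\<bar>"
  using norm_le_l1_cart[of c] by (simp add: sum_2)

lemma norm_zeta: "norm (zeta x y c) \<le> \<bar>x\<bar> + \<bar>y\<bar> + 2 * norm c"
proof -
  have "norm (zeta x y c) \<le> \<bar>x\<bar> + \<bar>y\<bar> + \<bar>c$1\<bar> + \<bar>c$2\<bar>"
    using norm_le_l1_cart[of "zeta x y c"] by (simp add: sum_4)
  moreover have "\<bar>c$1\<bar> \<le> norm c" "\<bar>c$2\<bar> \<le> norm c" by (simp_all add: component_le_norm_cart)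
  ultimately show ?thesis by linarith
qed

lemma norm_mv: "norm ((A::real^4^2) *v v) \<le> 2 * norm A * norm v"
proof -
  have e: "(A *v v) $ i = A$i \<bullet> v" for i
    by (simp add: matrix_vector_mult_def inner_vec_def mult.commute)
  have "\<bar>(A *v v) $ i\<bar> \<le> norm A * norm v" for i
    unfolding e by (rule order_trans[OF Cauchy_Schwarz_ineq2]) (simp add: mult_right_mono Finite_Cartesian_Product.norm_nth_le)
  from this[of 1] this[of 2] show ?thesis using norm_c2[of "A *v v"] by linarith
qed

definition solnat :: "real \<Rightarrow> (nat \<Rightarrow> real^4) \<Rightarrow> (nat \<Rightarrow> real^4) \<Rightarrow> (nat \<Rightarrow> real^4^2) \<Rightarrow> real \<Rightarrow> real^2 \<Rightarrow> (nat \<Rightarrow> real^4) \<Rightarrow> bool" where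
  "solnat \<mu> f g h a b s \<longleftrightarrow> s 0 $ 1 = a
    \<and> (\<forall>m. s (Suc m) $ 1 = \<mu> * s m $ 1 + f m \<bullet> s m)
    \<and> (\<forall>m. s (Suc m) $ 2 = inverse \<mu> * s m $ 2 + g m \<bullet> s m)
    \<and> (\<forall>m. chio (s (Suc m)) = chio (s m) + h m *v s m)
    \<and> (\<lambda>m. s m $ 1) \<longlonglongrightarrow> 0 \<and> (\<lambda>m. s m $ 2) \<longlonglongrightarrow> 0 \<and> (\<lambda>m. chio (s m)) \<longlonglongrightarrow> b"

context
  fixes \<mu> \<nu> K :: real and f g :: "nat \<Rightarrow> real^4" and h :: "nat \<Rightarrow> real^4^2"
  assumes mu: "0 < \<mu>" "\<mu> < 1" and nu: "0 < \<nu>" "\<nu> < 1" and K: "0 \<le> K" "K \<le> (1 - \<nu>) / 12"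
    and fb: "\<And>j. norm (f j) \<le> K * \<nu> ^ j"
    and gb: "\<And>j. norm (g j) \<le> K * \<nu> ^ j"
    and hb: "\<And>j. norm (h j) \<le> K * \<nu> ^ j"
begin

definition Lx :: "(nat \<Rightarrow> real^4) \<Rightarrow> nat \<Rightarrow> real" where
  "Lx z m = (\<Sum>j<m. \<mu> ^ (m - Suc j) * (f j \<bullet> z j))"
definition Ly :: "(nat \<Rightarrow> real^4) \<Rightarrow> nat \<Rightarrow> real" where
  "Ly z m = - (\<Sum>i. \<mu> ^ Suc i * (g (m + i) \<bullet> z (m + i)))"
definition Lc :: "(nat \<Rightarrow> real^4) \<Rightarrow> nat \<Rightarrow> real^2" where
  "Lc z m = - (\<Sum>i. h (m + i) *v z (m + i))"
definition Tf :: "real \<Rightarrow> real^2 \<Rightarrow> (nat \<Rightarrow> real^4) \<Rightarrow> nat \<Rightarrow> real^4" where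
  "Tf a b z m = zeta (\<mu> ^ m * a + Lx z m) (Ly z m) (b + Lc z m)"

lemma abs_mult_le1: "\<bar>t\<bar> \<le> c \<Longrightarrow> \<bar>a\<bar> \<le> 1 \<Longrightarrow> \<bar>(a::real) * t\<bar> \<le> c"
proof -
  assume "\<bar>t\<bar> \<le> c" "\<bar>a\<bar> \<le> 1"
  then have "\<bar>a\<bar> * \<bar>t\<bar> \<le> 1 * \<bar>t\<bar>" by (intro mult_right_mono) auto
  then show ?thesis using \<open>\<bar>t\<bar> \<le> c\<close> by (simp add: abs_mult)
qed

lemma geo_sum: "summable (\<lambda>i. c * \<nu> ^ i)" "(\<Sum>i. c * \<nu> ^ i) = c / (1 - \<nu>)"
  using nu by (auto intro!: summable_mult simp: suminf_mult suminf_geometric)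

lemma B_nonneg: "(\<And>j. norm (z j) \<le> B) \<Longrightarrow> 0 \<le> B"
  using norm_ge_zero order_trans by blast

lemma fterm: assumes "\<And>k. norm (z k) \<le> B" shows "\<bar>f j \<bullet> z j\<bar> \<le> K * B * \<nu> ^ j"
proof -
  have "\<bar>f j \<bullet> z j\<bar> \<le> norm (f j) * norm (z j)" by (rule Cauchy_Schwarz_ineq2)
  also have "\<dots> \<le> (K * \<nu> ^ j) * B" using assms fb K nu by (intro mult_mono) auto
  finally show ?thesis by (simp add: algebra_simps)
qed

lemma gterm: assumes "\<And>k. norm (z k) \<le> B" shows "\<bar>\<mu> ^ Suc i * (g j \<bullet> z j)\<bar> \<le> K * B * \<nu> ^ j"
proof -
  have "\<bar>g j \<bullet> z j\<bar> \<le> norm (g j) * norm (z j)" by (rule Cauchy_Schwarz_ineq2)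
  also have "\<dots> \<le> (K * \<nu> ^ j) * B" using assms gb K nu by (intro mult_mono) auto
  finally have "\<bar>g j \<bullet> z j\<bar> \<le> K * B * \<nu> ^ j" by (simp add: algebra_simps)
  moreover have "\<bar>\<mu> ^ Suc i\<bar> \<le> 1"
  proof -
    have "0 \<le> \<mu> ^ Suc i" "\<mu> ^ Suc i \<le> 1" using mu by (auto intro: power_le_one simp del: power_Suc)
    then show ?thesis by (metis abs_of_nonneg)
  qed
  ultimately show ?thesis by (rule abs_mult_le1)
qed

lemma hterm: assumes "\<And>k. norm (z k) \<le> B" shows "norm (h j *v z j) \<le> 2 * K * B * \<nu> ^ j"
proof -
  have "norm (h j *v z j) \<le> 2 * norm (h j) * norm (z j)" by (rule norm_mv)
  also have "\<dots> \<le> 2 * (K * \<nu> ^ j) * B" using assms hb K nu by (intro mult_mono) auto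
  finally show ?thesis by (simp add: algebra_simps)
qed

lemma Ly_bound: assumes "\<And>k. norm (z k) \<le> B"
  shows "summable (\<lambda>i. \<mu> ^ Suc i * (g (m + i) \<bullet> z (m + i)))" "\<bar>Ly z m\<bar> \<le> K * B * \<nu> ^ m / (1 - \<nu>)"
proof -
  have b: "norm (\<mu> ^ Suc i * (g (m + i) \<bullet> z (m + i))) \<le> (K * B * \<nu> ^ m) * \<nu> ^ i" for i
    using gterm[OF assms, of i "m+i"] by (simp add: power_add algebra_simps)
  show "summable (\<lambda>i. \<mu> ^ Suc i * (g (m + i) \<bullet> z (m + i)))"
    by (rule summable_comparison_test'[OF geo_sum(1) b])
  have "norm (\<Sum>i. \<mu> ^ Suc i * (g (m + i) \<bullet> z (m + i))) \<le> (\<Sum>i. (K * B * \<nu> ^ m) * \<nu> ^ i)"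
    by (rule norm_suminf_le[OF b geo_sum(1)])
  then show "\<bar>Ly z m\<bar> \<le> K * B * \<nu> ^ m / (1 - \<nu>)" by (simp add: Ly_def geo_sum(2))
qed

lemma Lc_bound: assumes "\<And>k. norm (z k) \<le> B"
  shows "summable (\<lambda>i. h (m + i) *v z (m + i))" "norm (Lc z m) \<le> 2 * K * B * \<nu> ^ m / (1 - \<nu>)"
proof -
  have b: "norm (h (m + i) *v z (m + i)) \<le> (2 * K * B * \<nu> ^ m) * \<nu> ^ i" for i
    using hterm[OF assms, of "m+i"] by (simp add: power_add algebra_simps)
  show "summable (\<lambda>i. h (m + i) *v z (m + i))"
    by (rule summable_comparison_test'[OF geo_sum(1) b])
  have "norm (\<Sum>i. h (m + i) *v z (m + i)) \<le> (\<Sum>i. (2 * K * B * \<nu> ^ m) * \<nu> ^ i)"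
    by (rule norm_suminf_le[OF b geo_sum(1)])
  then show "norm (Lc z m) \<le> 2 * K * B * \<nu> ^ m / (1 - \<nu>)" by (simp add: Lc_def geo_sum(2))
qed

lemma Lx_bound: assumes "\<And>k. norm (z k) \<le> B"
  shows "\<bar>Lx z m\<bar> \<le> K * B / (1 - \<nu>)"
proof -
  have "\<bar>Lx z m\<bar> \<le> (\<Sum>j<m. \<bar>\<mu> ^ (m - Suc j) * (f j \<bullet> z j)\<bar>)"
    unfolding Lx_def by (rule sum_abs)
  also have "\<dots> \<le> (\<Sum>j<m. K * B * \<nu> ^ j)"
  proof (rule sum_mono)
    fix j
    have a: "\<bar>\<mu> ^ (m - Suc j)\<bar> \<le> 1" using mu by (simp add: power_le_one)
    have b: "\<bar>f j \<bullet> z j\<bar> \<le> K * B * \<nu> ^ j" by (rule fterm) (rule assms)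
    show "\<bar>\<mu> ^ (m - Suc j) * (f j \<bullet> z j)\<bar> \<le> K * B * \<nu> ^ j"
      by (rule abs_mult_le1[OF b a])
  qed
  also have "\<dots> = K * B * ((1 - \<nu> ^ m) / (1 - \<nu>))"
    using nu by (simp add: sum_distrib_left[symmetric] sum_gp_strict)
  also have "\<dots> \<le> K * B * (1 / (1 - \<nu>))"
    using nu K B_nonneg[OF assms] by (intro mult_left_mono divide_right_mono) auto
  finally show ?thesis by simp
qed

lemma Lx_diff: "Lx (\<lambda>k. z k - w k) m = Lx z m - Lx w m"
  by (simp add: Lx_def inner_diff_right algebra_simps sum_subtractf)

lemma Ly_diff: assumes "\<And>k. norm (z k) \<le> B" "\<And>k. norm (w k) \<le> B'"
  shows "Ly (\<lambda>k. z k - w k) m = Ly z m - Ly w m"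
  using suminf_diff[OF Ly_bound(1)[OF assms(1), of m] Ly_bound(1)[OF assms(2), of m]]
  by (simp add: Ly_def inner_diff_right algebra_simps)

lemma Lc_diff: assumes "\<And>k. norm (z k) \<le> B" "\<And>k. norm (w k) \<le> B'"
  shows "Lc (\<lambda>k. z k - w k) m = Lc z m - Lc w m"
  using suminf_diff[OF Lc_bound(1)[OF assms(1), of m] Lc_bound(1)[OF assms(2), of m]]
  by (simp add: Lc_def matrix_vector_mult_diff_distrib algebra_simps)

lemma K_frac: assumes "0 \<le> d" shows "K * d / (1 - \<nu>) \<le> d / 12"
proof -
  have "K * d \<le> (1 - \<nu>) / 12 * d" using K assms by (intro mult_right_mono) auto
  then show ?thesis using nu by (simp add: field_simps)
qed

lemma Tf_contr: assumes "\<And>k. norm (z k) \<le> B" "\<And>k. norm (w k) \<le> B'" "\<And>k. norm (z k - w k) \<le> d"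
  shows "norm (Tf a b z m - Tf a b w m) \<le> d / 2"
proof -
  have d0: "0 \<le> d" using assms(3) norm_ge_zero order_trans by blast
  have e: "Tf a b z m - Tf a b w m = zeta (Lx (\<lambda>k. z k - w k) m) (Ly (\<lambda>k. z k - w k) m) (Lc (\<lambda>k. z k - w k) m)"
    by (simp add: Tf_def zeta_diff Lx_diff Ly_diff[OF assms(1,2)] Lc_diff[OF assms(1,2)])
  have n1: "\<bar>Lx (\<lambda>k. z k - w k) m\<bar> \<le> K * d / (1 - \<nu>)" by (rule Lx_bound) (rule assms(3))
  have n2: "\<bar>Ly (\<lambda>k. z k - w k) m\<bar> \<le> K * d * \<nu> ^ m / (1 - \<nu>)" by (rule Ly_bound) (rule assms(3))
  have n3': "norm (Lc (\<lambda>k. z k - w k) m) \<le> 2 * K * d * \<nu> ^ m / (1 - \<nu>)" by (rule Lc_bound) (rule assms(3))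
  then have n3: "norm (Lc (\<lambda>k. z k - w k) m) \<le> 2 * (K * d * \<nu> ^ m / (1 - \<nu>))" by simp
  have p: "K * d * \<nu> ^ m / (1 - \<nu>) \<le> K * d / (1 - \<nu>)"
    using nu K d0 by (intro divide_right_mono mult_left_le) (auto simp: power_le_one)
  have "norm (Tf a b z m - Tf a b w m) \<le> 6 * (K * d / (1 - \<nu>))"
    unfolding e using norm_zeta[of "Lx (\<lambda>k. z k - w k) m" "Ly (\<lambda>k. z k - w k) m" "Lc (\<lambda>k. z k - w k) m"] n1 n2 n3 p
    by linarith
  then show ?thesis using K_frac[OF d0] by linarith
qed

lemma Tf_bound: assumes "\<And>k. norm (z k) \<le> B"
  shows "norm (Tf a b z m) \<le> \<bar>a\<bar> + 2 * norm b + 6 * (K * B / (1 - \<nu>))"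
proof -
  define X where "X = K * B / (1 - \<nu>)"
  define Y where "Y = K * B * \<nu> ^ m / (1 - \<nu>)"
  have B0: "0 \<le> B" using assms norm_ge_zero order_trans by blast
  have n1: "\<bar>Lx z m\<bar> \<le> X" unfolding X_def by (rule Lx_bound) (rule assms)
  have n2: "\<bar>Ly z m\<bar> \<le> Y" unfolding Y_def by (rule Ly_bound) (rule assms)
  have n3': "norm (Lc z m) \<le> 2 * K * B * \<nu> ^ m / (1 - \<nu>)" by (rule Lc_bound) (rule assms)
  then have n3: "norm (Lc z m) \<le> 2 * Y" unfolding Y_def by simp
  have n4: "\<bar>\<mu> ^ m * a + Lx z m\<bar> \<le> \<bar>\<mu> ^ m * a\<bar> + \<bar>Lx z m\<bar>" by (rule abs_triangle_ineq)
  have p: "Y \<le> X" unfolding X_def Y_def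
    using nu K B0 by (intro divide_right_mono mult_left_le) (auto simp: power_le_one)
  have a: "\<bar>\<mu> ^ m * a\<bar> \<le> \<bar>a\<bar>" using mu by (simp add: abs_mult power_le_one mult_left_le_one_le)
  have "norm (b + Lc z m) \<le> norm b + norm (Lc z m)" by (rule norm_triangle_ineq)
  then have "norm (Tf a b z m) \<le> \<bar>a\<bar> + 2 * norm b + 6 * X" unfolding Tf_def
    using norm_zeta[of "\<mu> ^ m * a + Lx z m" "Ly z m" "b + Lc z m"] n1 n2 n3 n4 p a by linarith
  then show ?thesis unfolding X_def .
qed

lemma cont_nat: "continuous_on UNIV (q::nat \<Rightarrow> 'a::topological_space)" by simp

lemma fix_ex: "\<exists>s. (\<exists>B. \<forall>k. norm (s k) \<le> B) \<and> Tf a b s = s"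
proof -
  define R where "R = 2 * (\<bar>a\<bar> + 2 * norm b)"
  have R0: "0 \<le> R" unfolding R_def by simp
  define z where "z n = ((Tf a b) ^^ n) (\<lambda>_. 0)" for n
  have z0: "z 0 k = 0" for k by (simp add: z_def)
  have zS: "z (Suc n) = Tf a b (z n)" for n by (simp add: z_def)
  have zb: "\<And>k. norm (z n k) \<le> R" for n
  proof (induction n)
    case 0 then show ?case by (simp add: z0 R0)
  next
    case (Suc n)
    fix k
    define X where "X = K * R / (1 - \<nu>)"
    have "norm (Tf a b (z n) k) \<le> \<bar>a\<bar> + 2 * norm b + 6 * X"
      unfolding X_def by (rule Tf_bound) (rule Suc.IH)
    moreover have "X \<le> R / 12" unfolding X_def by (rule K_frac[OF R0])
    ultimately have t1: "norm (Tf a b (z n) k) \<le> \<bar>a\<bar> + 2 * norm b + 6 * X" and t2: "6 * X \<le> R / 2" by auto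
    have t3: "\<bar>a\<bar> + 2 * norm b = R / 2" using R_def by simp
    have "norm (Tf a b (z n) k) \<le> R" using t1 t2 t3 by linarith
    then show "norm (z (Suc n) k) \<le> R" by (simp add: zS)
  qed
  have zd: "\<And>k. norm (z (Suc n) k - z n k) \<le> 2 * R * (1/2) ^ n" for n
  proof (induction n)
    case 0
    show ?case using zb[of 1 k] zb[of 0 k] norm_triangle_ineq4[of "z 1 k" "z 0 k"] by simp
  next
    case (Suc n)
    have "norm (Tf a b (z (Suc n)) k - Tf a b (z n) k) \<le> 2 * R * (1/2) ^ n / 2"
      by (rule Tf_contr[OF zb zb]) (rule Suc.IH)
    then show ?case unfolding zS[of "Suc n"] zS[of n] by simp
  qed
  define D where "D k i = z (Suc i) k - z i k" for k i
  have geo: "summable (\<lambda>i. c * (1/2::real) ^ i)" "(\<Sum>i. c * (1/2::real) ^ i) = 2 * c" for c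
    by (auto intro!: summable_mult simp: suminf_mult suminf_geometric)
  have Db: "norm (D k (i + n)) \<le> (2 * R * (1/2) ^ n) * (1/2) ^ i" for k i n
    using zd[of "i + n" k] unfolding D_def by (simp add: power_add algebra_simps)
  have summ: "summable (D k)" for k
    using summable_comparison_test'[OF geo(1) Db[of k _ 0]] by simp
  define s where "s k = (\<Sum>i. D k i)" for k
  have tel: "(\<Sum>i<n. D k i) = z n k" for k n
    unfolding D_def using sum_lessThan_telescope[of "\<lambda>i. z i k" n] by (simp add: z0)
  have tail: "norm (s k - z n k) \<le> 4 * R * (1/2) ^ n" for n k
  proof -
    have "s k = (\<Sum>i. D k (i + n)) + z n k"
      unfolding s_def using suminf_split_initial_segment[OF summ[of k], of n] tel by simp
    then have "norm (s k - z n k) = norm (\<Sum>i. D k (i + n))" by simp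
    also have "\<dots> \<le> (\<Sum>i. (2 * R * (1/2) ^ n) * (1/2) ^ i)"
      by (rule norm_suminf_le[OF Db geo(1)])
    also have "\<dots> = 4 * R * (1/2) ^ n" by (simp add: geo(2))
    finally show "norm (s k - z n k) \<le> 4 * R * (1/2) ^ n" .
  qed
  have sb: "\<And>k. norm (s k) \<le> 4 * R" using tail[of k 0 for k] by (simp add: z0)
  have "Tf a b s k = s k" for k
  proof -
    have "norm (Tf a b s k - s k) \<le> 4 * R * (1/2) ^ n" for n
    proof -
      have "norm (Tf a b s k - Tf a b (z n) k) \<le> 4 * R * (1/2) ^ n / 2"
        by (rule Tf_contr[OF sb zb tail])
      moreover have "norm (z (Suc n) k - s k) \<le> 4 * R * (1/2) ^ Suc n"
        using tail[of k "Suc n"] by (simp add: norm_minus_commute)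
      moreover have "norm (Tf a b s k - s k) \<le> norm (Tf a b s k - Tf a b (z n) k) + norm (z (Suc n) k - s k)"
        using norm_triangle_ineq[of "Tf a b s k - Tf a b (z n) k" "z (Suc n) k - s k"] by (simp add: zS)
      ultimately show ?thesis by simp
    qed
    moreover have "(\<lambda>n. 4 * R * (1/2::real) ^ n) \<longlonglongrightarrow> 0"
      by (intro tendsto_mult_right_zero LIMSEQ_power_zero) auto
    ultimately have "norm (Tf a b s k - s k) \<le> 0"
      by (intro LIMSEQ_le_const[of _ 0]) auto
    then show ?thesis by simp
  qed
  then show ?thesis using sb by blast
qed

lemma fix_uniq: assumes "\<And>k. norm (s k) \<le> B" "\<And>k. norm (s' k) \<le> B'" "Tf a b s = s" "Tf a b s' = s'"
  shows "s = s'"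
proof -
  define D where "D = (SUP k. norm (s k - s' k))"
  have bdd: "bdd_above (range (\<lambda>k. norm (s k - s' k)))"
  proof (rule bdd_aboveI2)
    fix k show "norm (s k - s' k) \<le> B + B'"
      using norm_triangle_ineq4[of "s k" "s' k"] assms(1,2)[of k] by linarith
  qed
  have le: "norm (s k - s' k) \<le> D" for k unfolding D_def by (rule cSUP_upper[OF _ bdd]) simp
  have "norm (s k - s' k) \<le> D / 2" for k
  proof -
    have "norm (Tf a b s k - Tf a b s' k) \<le> D / 2" by (rule Tf_contr[OF assms(1,2) le])
    then show ?thesis using assms(3,4) by simp
  qed
  then have "D \<le> D / 2" unfolding D_def by (intro cSUP_least) auto
  moreover have "0 \<le> D" using le[of 0] norm_ge_zero order_trans by blast
  ultimately have "D = 0" by simp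
  then show ?thesis using le by (intro ext) simp
qed

lemma Lx0: "Lx z 0 = 0" by (simp add: Lx_def)

lemma Lx_Suc: "Lx z (Suc m) = \<mu> * Lx z m + f m \<bullet> z m"
proof -
  have "(\<Sum>j<m. \<mu> ^ (Suc m - Suc j) * (f j \<bullet> z j)) = (\<Sum>j<m. \<mu> * (\<mu> ^ (m - Suc j) * (f j \<bullet> z j)))"
  proof (intro sum.cong refl)
    fix j assume "j \<in> {..<m}"
    then have "Suc m - Suc j = Suc (m - Suc j)" by simp
    then show "\<mu> ^ (Suc m - Suc j) * (f j \<bullet> z j) = \<mu> * (\<mu> ^ (m - Suc j) * (f j \<bullet> z j))" by simp
  qed
  then show ?thesis by (simp add: Lx_def sum_distrib_left)
qed

lemma Ly_Suc: assumes "\<And>k. norm (z k) \<le> B"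
  shows "Ly z (Suc m) = inverse \<mu> * Ly z m + g m \<bullet> z m"
proof -
  define v where "v = (\<lambda>i. \<mu> ^ Suc i * (g (m + i) \<bullet> z (m + i)))"
  have sv: "summable v" unfolding v_def by (rule Ly_bound(1)[OF assms])
  have sw: "summable (\<lambda>i. \<mu> ^ Suc i * (g (Suc m + i) \<bullet> z (Suc m + i)))" by (rule Ly_bound(1)[OF assms])
  have "(\<Sum>i. v (Suc i)) = suminf v - v 0" by (rule suminf_split_head[OF sv])
  moreover have "(\<Sum>i. v (Suc i)) = \<mu> * (\<Sum>i. \<mu> ^ Suc i * (g (Suc m + i) \<bullet> z (Suc m + i)))"
  proof -
    have "(\<lambda>i. v (Suc i)) = (\<lambda>i. \<mu> * (\<mu> ^ Suc i * (g (Suc m + i) \<bullet> z (Suc m + i))))"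
      by (simp add: v_def fun_eq_iff)
    then show ?thesis using suminf_mult[OF sw, of \<mu>] by simp
  qed
  ultimately have "\<mu> * (- Ly z (Suc m)) = - Ly z m - \<mu> * (g m \<bullet> z m)"
    by (simp add: Ly_def v_def)
  then show ?thesis using mu by (simp add: field_simps)
qed

lemma Lc_Suc: assumes "\<And>k. norm (z k) \<le> B"
  shows "Lc z (Suc m) = Lc z m + h m *v z m"
proof -
  define v where "v = (\<lambda>i. h (m + i) *v z (m + i))"
  have sv: "summable v" unfolding v_def by (rule Lc_bound(1)[OF assms])
  have "(\<Sum>i. v (Suc i)) = suminf v - v 0" by (rule suminf_split_head[OF sv])
  then show ?thesis by (simp add: Lc_def v_def)
qed

lemma Ly_lim: assumes "\<And>k. norm (z k) \<le> B" shows "Ly z \<longlonglongrightarrow> 0"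
proof (rule Lim_null_comparison)
  show "\<forall>\<^sub>F m in sequentially. norm (Ly z m) \<le> K * B / (1 - \<nu>) * \<nu> ^ m"
    using Ly_bound(2)[OF assms] by simp
  show "(\<lambda>m. K * B / (1 - \<nu>) * \<nu> ^ m) \<longlonglongrightarrow> 0"
    using nu by (intro tendsto_mult_right_zero LIMSEQ_power_zero) auto
qed

lemma Lc_lim: assumes "\<And>k. norm (z k) \<le> B" shows "Lc z \<longlonglongrightarrow> 0"
proof (rule Lim_null_comparison)
  show "\<forall>\<^sub>F m in sequentially. norm (Lc z m) \<le> 2 * K * B / (1 - \<nu>) * \<nu> ^ m"
    using Lc_bound(2)[OF assms] by simp
  show "(\<lambda>m. 2 * K * B / (1 - \<nu>) * \<nu> ^ m) \<longlonglongrightarrow> 0"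
    using nu by (intro tendsto_mult_right_zero LIMSEQ_power_zero) auto
qed

lemma Lx_lim: assumes "\<And>k. norm (z k) \<le> B" shows "(\<lambda>m. \<mu> ^ m * a + Lx z m) \<longlonglongrightarrow> 0"
proof (rule Lim_null_comparison)
  define \<rho> where "\<rho> = max \<mu> \<nu>"
  have r: "0 < \<rho>" "\<rho> < 1" "\<mu> \<le> \<rho>" "\<nu> \<le> \<rho>" using mu nu by (auto simp: \<rho>_def)
  have B0: "0 \<le> B" using assms norm_ge_zero order_trans by blast
  have "\<bar>\<mu> ^ m * a + Lx z m\<bar> \<le> \<bar>a\<bar> * \<mu> ^ m + K * B / \<rho> * (of_nat m * \<rho> ^ m)" for m
  proof -
    have "\<bar>Lx z m\<bar> \<le> (\<Sum>j<m. \<bar>\<mu> ^ (m - Suc j) * (f j \<bullet> z j)\<bar>)"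
      unfolding Lx_def by (rule sum_abs)
    also have "\<dots> \<le> (\<Sum>j<m. K * B * (\<rho> ^ m / \<rho>))"
    proof (rule sum_mono)
      fix j assume "j \<in> {..<m}"
      then have jm: "j < m" by simp
      have b: "\<bar>f j \<bullet> z j\<bar> \<le> K * B * \<nu> ^ j" by (rule fterm) (rule assms)
      have "\<mu> ^ (m - Suc j) * \<nu> ^ j \<le> \<rho> ^ (m - Suc j) * \<rho> ^ j"
        using mu nu r by (intro mult_mono power_mono) auto
      also have "\<dots> = \<rho> ^ m / \<rho>"
      proof -
        have "\<rho> ^ (m - Suc j) * \<rho> ^ j * \<rho> = \<rho> ^ m"
          using jm by (simp add: power_add[symmetric] mult.commute[of _ \<rho>] power_Suc[symmetric])
        then show ?thesis using r by (simp add: field_simps)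
      qed
      finally have c: "\<mu> ^ (m - Suc j) * \<nu> ^ j \<le> \<rho> ^ m / \<rho>" .
      have "\<bar>\<mu> ^ (m - Suc j) * (f j \<bullet> z j)\<bar> = \<mu> ^ (m - Suc j) * \<bar>f j \<bullet> z j\<bar>"
        using mu by (simp add: abs_mult)
      also have "\<dots> \<le> \<mu> ^ (m - Suc j) * (K * B * \<nu> ^ j)"
        using mu b by (intro mult_left_mono) auto
      also have "\<dots> = K * B * (\<mu> ^ (m - Suc j) * \<nu> ^ j)" by simp
      also have "\<dots> \<le> K * B * (\<rho> ^ m / \<rho>)"
        using c K B0 by (intro mult_left_mono) auto
      finally show "\<bar>\<mu> ^ (m - Suc j) * (f j \<bullet> z j)\<bar> \<le> K * B * (\<rho> ^ m / \<rho>)" .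
    qed
    also have "\<dots> = K * B / \<rho> * (of_nat m * \<rho> ^ m)" by simp
    finally have "\<bar>Lx z m\<bar> \<le> K * B / \<rho> * (of_nat m * \<rho> ^ m)" .
    moreover have "\<bar>\<mu> ^ m * a\<bar> = \<bar>a\<bar> * \<mu> ^ m" using mu by (simp add: abs_mult)
    ultimately show ?thesis using abs_triangle_ineq[of "\<mu> ^ m * a" "Lx z m"] by linarith
  qed
  then show "\<forall>\<^sub>F m in sequentially. norm (\<mu> ^ m * a + Lx z m) \<le> \<bar>a\<bar> * \<mu> ^ m + K * B / \<rho> * (of_nat m * \<rho> ^ m)"
    by simp
  have "(\<lambda>m. of_nat m * \<rho> ^ m) \<longlonglongrightarrow> 0" by (rule powser_times_n_limit_0) (use r in simp)
  then show "(\<lambda>m. \<bar>a\<bar> * \<mu> ^ m + K * B / \<rho> * (of_nat m * \<rho> ^ m)) \<longlonglongrightarrow> 0"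
    using mu by (intro tendsto_add_zero tendsto_mult_right_zero LIMSEQ_power_zero) auto
qed

lemma fix_props: assumes sb: "\<And>k. norm (s k) \<le> B" and fx: "Tf a b s = s"
  shows "s 0 $ 1 = a"
    and "\<And>m. s (Suc m) $ 1 = \<mu> * s m $ 1 + f m \<bullet> s m"
    and "\<And>m. s (Suc m) $ 2 = inverse \<mu> * s m $ 2 + g m \<bullet> s m"
    and "\<And>m. chio (s (Suc m)) = chio (s m) + h m *v s m"
    and "(\<lambda>m. s m $ 1) \<longlonglongrightarrow> 0" "(\<lambda>m. s m $ 2) \<longlonglongrightarrow> 0" "(\<lambda>m. chio (s m)) \<longlonglongrightarrow> b"
proof -
  have e: "s m = zeta (\<mu> ^ m * a + Lx s m) (Ly s m) (b + Lc s m)" for m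
    using fun_cong[OF fx, of m] unfolding Tf_def by simp
  have c1: "s m $ 1 = \<mu> ^ m * a + Lx s m" for m by (subst e) simp
  have c2: "s m $ 2 = Ly s m" for m by (subst e) simp
  have c3: "chio (s m) = b + Lc s m" for m by (subst e) simp
  show "s 0 $ 1 = a" by (simp add: c1 Lx0)
  show "s (Suc m) $ 1 = \<mu> * s m $ 1 + f m \<bullet> s m" for m by (simp add: c1 Lx_Suc algebra_simps)
  show "s (Suc m) $ 2 = inverse \<mu> * s m $ 2 + g m \<bullet> s m" for m by (simp add: c2 Ly_Suc[OF sb])
  show "chio (s (Suc m)) = chio (s m) + h m *v s m" for m by (simp add: c3 Lc_Suc[OF sb] algebra_simps)
  show "(\<lambda>m. s m $ 1) \<longlonglongrightarrow> 0" unfolding c1 by (rule Lx_lim[OF sb])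
  show "(\<lambda>m. s m $ 2) \<longlonglongrightarrow> 0" unfolding c2 by (rule Ly_lim[OF sb])
  show "(\<lambda>m. chio (s m)) \<longlonglongrightarrow> b" unfolding c3 using tendsto_add[OF tendsto_const Lc_lim[OF sb], of b] by simp
qed

lemma sol_fix:
  assumes s1: "s 0 $ 1 = a"
    and s2: "\<And>m. s (Suc m) $ 1 = \<mu> * s m $ 1 + f m \<bullet> s m"
    and s3: "\<And>m. s (Suc m) $ 2 = inverse \<mu> * s m $ 2 + g m \<bullet> s m"
    and s4: "\<And>m. chio (s (Suc m)) = chio (s m) + h m *v s m"
    and l1: "(\<lambda>m. s m $ 1) \<longlonglongrightarrow> 0" and l2: "(\<lambda>m. s m $ 2) \<longlonglongrightarrow> 0" and l3: "(\<lambda>m. chio (s m)) \<longlonglongrightarrow> b"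
  shows "\<exists>B. \<forall>k. norm (s k) \<le> B" "Tf a b s = s"
proof -
  obtain K1 where K1: "\<And>n. norm (s n $ 1) \<le> K1"
    using convergent_imp_Bseq[OF convergentI[OF l1]] by (auto simp: Bseq_def)
  obtain K2 where K2: "\<And>n. norm (s n $ 2) \<le> K2"
    using convergent_imp_Bseq[OF convergentI[OF l2]] by (auto simp: Bseq_def)
  obtain K3 where K3: "\<And>n. norm (chio (s n)) \<le> K3"
    using convergent_imp_Bseq[OF convergentI[OF l3]] by (auto simp: Bseq_def)
  have sb: "norm (s k) \<le> K1 + K2 + 2 * K3" for k
  proof -
    have "norm (s k) = norm (zeta (s k $ 1) (s k $ 2) (chio (s k)))" by simp
    also have "\<dots> \<le> \<bar>s k $ 1\<bar> + \<bar>s k $ 2\<bar> + 2 * norm (chio (s k))" by (rule norm_zeta)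
    finally show ?thesis using K1[of k] K2[of k] K3[of k] by simp
  qed
  then show "\<exists>B. \<forall>k. norm (s k) \<le> B" by blast
  have c1: "s m $ 1 = \<mu> ^ m * a + Lx s m" for m
    by (induction m) (simp_all add: s1 Lx0 s2 Lx_Suc algebra_simps)
  have c2: "s m $ 2 = Ly s m" for m
  proof -
    have it: "s m $ 2 = \<mu> ^ p * s (m + p) $ 2 - (\<Sum>i<p. \<mu> ^ Suc i * (g (m + i) \<bullet> s (m + i)))" for p
    proof (induction p)
      case 0 then show ?case by simp
    next
      case (Suc p)
      have "\<mu> * s (Suc (m + p)) $ 2 = s (m + p) $ 2 + \<mu> * (g (m + p) \<bullet> s (m + p))"
        using s3[of "m + p"] mu by (simp add: field_simps)
      then have "\<mu> ^ p * s (m + p) $ 2 = \<mu> ^ Suc p * s (m + Suc p) $ 2 - \<mu> ^ Suc p * (g (m + p) \<bullet> s (m + p))"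
        by (simp add: algebra_simps) (metis (no_types, lifting) mult.assoc mult.left_commute add_diff_cancel_right' distrib_left)
      then show ?case using Suc.IH by simp
    qed
    have sm: "summable (\<lambda>i. \<mu> ^ Suc i * (g (m + i) \<bullet> s (m + i)))" by (rule Ly_bound(1)[OF sb])
    have "(\<lambda>p. \<mu> ^ p * s (m + p) $ 2 - (\<Sum>i<p. \<mu> ^ Suc i * (g (m + i) \<bullet> s (m + i))))
          \<longlonglongrightarrow> 0 * 0 - (\<Sum>i. \<mu> ^ Suc i * (g (m + i) \<bullet> s (m + i)))"
    proof (intro tendsto_diff tendsto_mult summable_LIMSEQ sm)
      show "(\<lambda>p. \<mu> ^ p) \<longlonglongrightarrow> 0" using mu by (intro LIMSEQ_power_zero) auto
      show "(\<lambda>p. s (m + p) $ 2) \<longlonglongrightarrow> 0" using LIMSEQ_ignore_initial_segment[OF l2, of m] by (simp add: add.commute)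
    qed
    then have "(\<lambda>p. s m $ 2) \<longlonglongrightarrow> Ly s m" unfolding Ly_def by (subst (asm) it[symmetric]) simp
    then show ?thesis using LIMSEQ_unique[OF tendsto_const] by blast
  qed
  have c3: "chio (s m) = b + Lc s m" for m
  proof -
    have it: "chio (s m) = chio (s (m + p)) - (\<Sum>i<p. h (m + i) *v s (m + i))" for p
      by (induction p) (simp_all add: s4 algebra_simps)
    have sm: "summable (\<lambda>i. h (m + i) *v s (m + i))" by (rule Lc_bound(1)[OF sb])
    have "(\<lambda>p. chio (s (m + p)) - (\<Sum>i<p. h (m + i) *v s (m + i)))
          \<longlonglongrightarrow> b - (\<Sum>i. h (m + i) *v s (m + i))"
    proof (intro tendsto_diff summable_LIMSEQ sm)
      show "(\<lambda>p. chio (s (m + p))) \<longlonglongrightarrow> b" using LIMSEQ_ignore_initial_segment[OF l3, of m] by (simp add: add.commute)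
    qed
    then have "(\<lambda>p. chio (s m)) \<longlonglongrightarrow> b + Lc s m" unfolding Lc_def by (subst (asm) it[symmetric]) simp
    then show ?thesis using LIMSEQ_unique[OF tendsto_const] by blast
  qed
  show "Tf a b s = s"
  proof
    fix m
    show "Tf a b s m = s m"
      unfolding Tf_def c1[symmetric] c2[symmetric] c3[symmetric] by simp
  qed
qed

lemma sol_exists: "\<exists>s. solnat \<mu> f g h a b s"
proof -
  obtain s B where sb: "\<And>k. norm (s k) \<le> B" and fx: "Tf a b s = s" using fix_ex by blast
  show ?thesis unfolding solnat_def using fix_props[OF sb fx] by blast
qed

lemma sol_unique: assumes "solnat \<mu> f g h a b s" "solnat \<mu> f g h a b s'" shows "s = s'"
proof -
  obtain B where B: "\<forall>k. norm (s k) \<le> B" and fx: "Tf a b s = s"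
    using sol_fix[of s a b] assms(1) unfolding solnat_def by blast
  obtain B' where B': "\<forall>k. norm (s' k) \<le> B'" and fx': "Tf a b s' = s'"
    using sol_fix[of s' a b] assms(2) unfolding solnat_def by blast
  show ?thesis by (rule fix_uniq[of s B s' B' a b]) (use B B' fx fx' in auto)
qed

end

lemma filterlim_shift_int: "filterlim (\<lambda>m::nat. N + int m) at_top sequentially"
  unfolding filterlim_at_top
proof
  fix Z :: int
  show "\<forall>\<^sub>F m in sequentially. Z \<le> N + int m"
    unfolding eventually_sequentially by (rule exI[of _ "nat (Z - N)"]) auto
qed

lemma filterlim_nat_shift: "filterlim (\<lambda>k::int. nat (k - N)) sequentially at_top"
  unfolding filterlim_at_top
proof
  fix Z :: nat
  show "\<forall>\<^sub>F k in at_top. Z \<le> nat (k - N)"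
    unfolding eventually_at_top_linorder by (rule exI[of _ "N + int Z"]) auto
qed

lemma good_to_nat:
  assumes "good_sol \<mu> F G H N xi0 chip xi eta chi"
  shows "solnat \<mu> (\<lambda>j. F (N + int j)) (\<lambda>j. G (N + int j)) (\<lambda>j. H (N + int j)) xi0 chip
           (\<lambda>m. zeta (xi (N + int m)) (eta (N + int m)) (chi (N + int m)))"
proof -
  have sys: "solves_sys \<mu> F G H N xi eta chi" and x0: "xi N = xi0"
    and l3: "(chi \<longlongrightarrow> chip) at_top" and l1: "(xi \<longlongrightarrow> 0) at_top" and l2: "(eta \<longlongrightarrow> 0) at_top"
    using assms unfolding good_sol_def by auto
  have rec: "xi (N + int m + 1) = \<mu> * xi (N + int m) + F (N + int m) \<bullet> zeta (xi (N + int m)) (eta (N + int m)) (chi (N + int m))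
           \<and> eta (N + int m + 1) = inverse \<mu> * eta (N + int m) + G (N + int m) \<bullet> zeta (xi (N + int m)) (eta (N + int m)) (chi (N + int m))
           \<and> chi (N + int m + 1) = chi (N + int m) + H (N + int m) *v zeta (xi (N + int m)) (eta (N + int m)) (chi (N + int m))" for m
    using sys unfolding solves_sys_def by auto
  have sh: "N + int (Suc m) = N + int m + 1" for m by simp
  show ?thesis unfolding solnat_def
  proof (intro conjI allI)
    show "zeta (xi (N + int 0)) (eta (N + int 0)) (chi (N + int 0)) $ 1 = xi0" using x0 by simp
  next
    fix m
    show "zeta (xi (N + int (Suc m))) (eta (N + int (Suc m))) (chi (N + int (Suc m))) $ 1 =
      \<mu> * zeta (xi (N + int m)) (eta (N + int m)) (chi (N + int m)) $ 1 + F (N + int m) \<bullet> zeta (xi (N + int m)) (eta (N + int m)) (chi (N + int m))"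
      unfolding sh using rec[of m] by simp
    show "zeta (xi (N + int (Suc m))) (eta (N + int (Suc m))) (chi (N + int (Suc m))) $ 2 =
      inverse \<mu> * zeta (xi (N + int m)) (eta (N + int m)) (chi (N + int m)) $ 2 + G (N + int m) \<bullet> zeta (xi (N + int m)) (eta (N + int m)) (chi (N + int m))"
      unfolding sh using rec[of m] by simp
    show "chio (zeta (xi (N + int (Suc m))) (eta (N + int (Suc m))) (chi (N + int (Suc m)))) =
      chio (zeta (xi (N + int m)) (eta (N + int m)) (chi (N + int m))) + H (N + int m) *v zeta (xi (N + int m)) (eta (N + int m)) (chi (N + int m))"
      unfolding sh using rec[of m] by simp
  next
    show "(\<lambda>m. zeta (xi (N + int m)) (eta (N + int m)) (chi (N + int m)) $ 1) \<longlonglongrightarrow> 0"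
      using filterlim_compose[OF l1 filterlim_shift_int[of N]] by simp
    show "(\<lambda>m. zeta (xi (N + int m)) (eta (N + int m)) (chi (N + int m)) $ 2) \<longlonglongrightarrow> 0"
      using filterlim_compose[OF l2 filterlim_shift_int[of N]] by simp
    show "(\<lambda>m. chio (zeta (xi (N + int m)) (eta (N + int m)) (chi (N + int m)))) \<longlonglongrightarrow> chip"
      using filterlim_compose[OF l3 filterlim_shift_int[of N]] by simp
  qed
qed

lemma nat_to_good:
  assumes "solnat \<mu> (\<lambda>j. F (N + int j)) (\<lambda>j. G (N + int j)) (\<lambda>j. H (N + int j)) xi0 chip s"
  shows "good_sol \<mu> F G H N xi0 chip (\<lambda>k. s (nat (k - N)) $ 1) (\<lambda>k. s (nat (k - N)) $ 2) (\<lambda>k. chio (s (nat (k - N))))"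
proof -
  note A = assms[unfolded solnat_def]
  have sys: "solves_sys \<mu> F G H N (\<lambda>k. s (nat (k - N)) $ 1) (\<lambda>k. s (nat (k - N)) $ 2) (\<lambda>k. chio (s (nat (k - N))))"
    unfolding solves_sys_def
  proof (intro allI impI)
    fix n assume "N \<le> n"
    then obtain m where n: "n = N + int m" by (metis le_iff_add zle_iff_zadd)
    have e1: "nat (n + 1 - N) = Suc m" "nat (n - N) = m" using n by auto
    show "s (nat (n + 1 - N)) $ 1 = \<mu> * s (nat (n - N)) $ 1 + F n \<bullet> zeta (s (nat (n - N)) $ 1) (s (nat (n - N)) $ 2) (chio (s (nat (n - N)))) \<and>
         s (nat (n + 1 - N)) $ 2 = inverse \<mu> * s (nat (n - N)) $ 2 + G n \<bullet> zeta (s (nat (n - N)) $ 1) (s (nat (n - N)) $ 2) (chio (s (nat (n - N)))) \<and>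
         chio (s (nat (n + 1 - N))) = chio (s (nat (n - N))) + H n *v zeta (s (nat (n - N)) $ 1) (s (nat (n - N)) $ 2) (chio (s (nat (n - N))))"
      unfolding e1 zeta_chio using A n by simp
  qed
  show ?thesis unfolding good_sol_def
  proof (intro conjI sys)
    show "s (nat (N - N)) $ 1 = xi0" using A by simp
    show "((\<lambda>k. chio (s (nat (k - N)))) \<longlongrightarrow> chip) at_top"
      using filterlim_compose[OF _ filterlim_nat_shift[of N], of "\<lambda>m. chio (s m)"] A by simp
    show "((\<lambda>k. s (nat (k - N)) $ 1) \<longlongrightarrow> 0) at_top"
      using filterlim_compose[OF _ filterlim_nat_shift[of N], of "\<lambda>m. s m $ 1"] A by simp
    show "((\<lambda>k. s (nat (k - N)) $ 2) \<longlongrightarrow> 0) at_top"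
      using filterlim_compose[OF _ filterlim_nat_shift[of N], of "\<lambda>m. s m $ 2"] A by simp
  qed
qed


theorem lemma3:
  fixes \<mu> \<nu> C :: real and N0 :: int
    and F G :: "int \<Rightarrow> real^4" and H :: "int \<Rightarrow> real^4^2"
  assumes "0 < \<mu>" "\<mu> < 1" "0 < \<nu>" "\<nu> < 1" "C > 0"
    and "\<forall>n\<ge>N0. norm (F n) \<le> C * \<nu> powi n"
    and "\<forall>n\<ge>N0. norm (G n) \<le> C * \<nu> powi n"
    and "\<forall>n\<ge>N0. norm (H n) \<le> C * \<nu> powi n"
  shows "\<exists>N\<ge>N0. \<forall>(xi0::real) (chip::real^2).
           (\<exists>xi eta chi. good_sol \<mu> F G H N xi0 chip xi eta chi)
         \<and> (\<forall>xi eta chi xi' eta' chi'.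
               good_sol \<mu> F G H N xi0 chip xi eta chi \<longrightarrow>
               good_sol \<mu> F G H N xi0 chip xi' eta' chi' \<longrightarrow>
               (\<forall>n\<ge>N. xi n = xi' n \<and> eta n = eta' n \<and> chi n = chi' n))"
proof -
  note mu = assms(1,2) and nu = assms(3,4)
  define c0 where "c0 = C * \<nu> powi N0"
  have c0: "0 < c0" unfolding c0_def using assms(3,5) by simp
  obtain p where p: "\<nu> ^ p < (1 - \<nu>) / (12 * c0)"
    using real_arch_pow_inv[of "(1 - \<nu>) / (12 * c0)" \<nu>] c0 nu by auto
  define N where "N = N0 + int p"
  define K where "K = C * \<nu> powi N"
  have KK: "K = c0 * \<nu> ^ p" using nu unfolding K_def N_def c0_def by (simp add: power_int_add)
  have K0: "0 \<le> K" unfolding KK using c0 nu by simp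
  have "c0 * \<nu> ^ p \<le> c0 * ((1 - \<nu>) / (12 * c0))" using p c0 by (intro mult_left_mono) auto
  then have K1: "K \<le> (1 - \<nu>) / 12" unfolding KK using c0 by simp
  have pw: "C * \<nu> powi (N + int j) = K * \<nu> ^ j" for j
    using nu unfolding K_def by (simp add: power_int_add)
  have NN: "N + int j \<ge> N0" for j unfolding N_def by simp
  have bF: "norm (F (N + int j)) \<le> K * \<nu> ^ j" for j using assms(6) NN[of j] pw[of j] by auto
  have bG: "norm (G (N + int j)) \<le> K * \<nu> ^ j" for j using assms(7) NN[of j] pw[of j] by auto
  have bH: "norm (H (N + int j)) \<le> K * \<nu> ^ j" for j using assms(8) NN[of j] pw[of j] by auto
  note ex = sol_exists[where \<mu>=\<mu> and \<nu>=\<nu> and K=K and f="\<lambda>j. F (N + int j)" and g="\<lambda>j. G (N + int j)" and h="\<lambda>j. H (N + int j)",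
      OF mu nu K0 K1 bF bG bH]
  note un = sol_unique[where \<mu>=\<mu> and \<nu>=\<nu> and K=K and f="\<lambda>j. F (N + int j)" and g="\<lambda>j. G (N + int j)" and h="\<lambda>j. H (N + int j)",
      OF mu nu K0 K1 bF bG bH]
  show ?thesis
  proof (rule exI[of _ N], intro conjI allI)
    show "N0 \<le> N" unfolding N_def by simp
  next
    fix xi0 :: real and chip :: "real^2"
    obtain s where "solnat \<mu> (\<lambda>j. F (N + int j)) (\<lambda>j. G (N + int j)) (\<lambda>j. H (N + int j)) xi0 chip s"
      using ex by blast
    from nat_to_good[OF this]
    show "\<exists>xi eta chi. good_sol \<mu> F G H N xi0 chip xi eta chi" by blast
  next
    fix xi0 :: real and chip :: "real^2" and xi eta chi xi' eta' chi'
    show "good_sol \<mu> F G H N xi0 chip xi eta chi \<longrightarrow> good_sol \<mu> F G H N xi0 chip xi' eta' chi' \<longrightarrow>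
       (\<forall>n\<ge>N. xi n = xi' n \<and> eta n = eta' n \<and> chi n = chi' n)"
    proof (intro impI allI)
    fix n :: int
    assume g1: "good_sol \<mu> F G H N xi0 chip xi eta chi" and g2: "good_sol \<mu> F G H N xi0 chip xi' eta' chi'"
      and nN: "N \<le> n"
    have e: "(\<lambda>m. zeta (xi (N + int m)) (eta (N + int m)) (chi (N + int m)))
           = (\<lambda>m. zeta (xi' (N + int m)) (eta' (N + int m)) (chi' (N + int m)))"
      by (rule un[OF good_to_nat[OF g1] good_to_nat[OF g2]])
    obtain m where n: "n = N + int m" using nN by (metis zle_iff_zadd)
    have "zeta (xi n) (eta n) (chi n) = zeta (xi' n) (eta' n) (chi' n)"
      using fun_cong[OF e, of m] n by simp
    then have "zeta (xi n) (eta n) (chi n) $ 1 = zeta (xi' n) (eta' n) (chi' n) $ 1"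
      "zeta (xi n) (eta n) (chi n) $ 2 = zeta (xi' n) (eta' n) (chi' n) $ 2"
      "chio (zeta (xi n) (eta n) (chi n)) = chio (zeta (xi' n) (eta' n) (chi' n))" by simp_all
    then show "xi n = xi' n \<and> eta n = eta' n \<and> chi n = chi' n" by simp
    qed
  qed
qed

end
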